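(* Let $f,g$ be smooth functions on an open interval $J\subset\mathbb{R}$, let $F$ be an antiderivative of $f$, $M=e^{2F}$, and let $V$ and $Q$ be functions on $J$ with $V'=Mg$ and $Q'=\sqrt M=e^{F}$. Suppose there are constants $A$ and $B\neq0$ and a constant $V_0$ such that $V=AQ^2+B/Q^2+V_0$ on $J$ (with $Q\neq0$ on $J$). Then, wherever the denominators below are nonzero, $$f=-\frac54\,\frac{g''+(fg)'}{g'+fg-2A}+\frac{g'''+(fg)''}{g''+(fg)'} .$$
   Context: Primes denote derivatives with respect to $x$. This is the necessary condition for the potential $V(x)=\int^xM(s)g(s)\,ds$ of the Liénard-II equation $\ddot x+f(x)\dot x^2+g(x)=0$ (with Lagrangian $L=\frac12M(x)\dot x^2-V(x)$, $M$ the Jacobi last multiplier) to be of the superintegrable form $AQ^2+B/Q^2$. *)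

theory Defs
  imports "HOL-Analysis.Analysis"
begin

definition smooth_on :: "(real \<Rightarrow> real) \<Rightarrow> real set \<Rightarrow> bool" where
  "smooth_on h J \<longleftrightarrow> (\<forall>k. \<forall>x\<in>J. ((deriv ^^ k) h) differentiable (at x))"

end

theory Submission
  imports Defs
begin

lemma smoothD0: "smooth_on h J \<Longrightarrow> x \<in> J \<Longrightarrow> (h has_real_derivative deriv h x) (at x)"
  unfolding smooth_on_def by (metis funpow_0 DERIV_deriv_iff_real_differentiable)

lemma smoothD1: "smooth_on h J \<Longrightarrow> x \<in> J \<Longrightarrow> (deriv h has_real_derivative deriv (deriv h) x) (at x)"
  unfolding smooth_on_def
proof -
  assume "\<forall>k. \<forall>x\<in>J. (deriv ^^ k) h differentiable at x" "x \<in> J"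
  then have "(deriv ^^ Suc 0) h differentiable at x" by blast
  then show ?thesis by (simp add: DERIV_deriv_iff_real_differentiable)
qed

lemma smoothD2: "smooth_on h J \<Longrightarrow> x \<in> J \<Longrightarrow> (deriv (deriv h) has_real_derivative deriv (deriv (deriv h)) x) (at x)"
  unfolding smooth_on_def
proof -
  assume "\<forall>k. \<forall>x\<in>J. (deriv ^^ k) h differentiable at x" "x \<in> J"
  then have "(deriv ^^ Suc (Suc 0)) h differentiable at x" by blast
  then show ?thesis by (simp add: DERIV_deriv_iff_real_differentiable)
qed

lemma sqrt_exp2: "sqrt (exp (2 * y)) = exp (y::real)"
proof -
  have "exp (2*y) = (exp y)^2" by (rule exp_double)
  then show ?thesis by simp
qed

theorem mainTheorem13:
  fixes f g F V Q :: "real \<Rightarrow> real" and J :: "real set" and A B V0 :: real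
  assumes J: "open J" "is_interval J"
    and smooth: "smooth_on f J" "smooth_on g J"
    and F: "\<And>x. x \<in> J \<Longrightarrow> (F has_real_derivative f x) (at x)"
    and V: "\<And>x. x \<in> J \<Longrightarrow> (V has_real_derivative exp (2 * F x) * g x) (at x)"
    and Q: "\<And>x. x \<in> J \<Longrightarrow> (Q has_real_derivative sqrt (exp (2 * F x))) (at x)"
    and Qnz: "\<And>x. x \<in> J \<Longrightarrow> Q x \<noteq> 0"
    and B: "B \<noteq> 0"
    and VQ: "\<And>x. x \<in> J \<Longrightarrow> V x = A * (Q x)^2 + B / (Q x)^2 + V0"
  shows "\<forall>x\<in>J.
     deriv g x + f x * g x - 2 * A \<noteq> 0 \<longrightarrow>
     deriv (deriv g) x + deriv (\<lambda>t. f t * g t) x \<noteq> 0 \<longrightarrow>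
     f x = - (5/4) * ((deriv (deriv g) x + deriv (\<lambda>t. f t * g t) x)
                       / (deriv g x + f x * g x - 2 * A))
           + (deriv (deriv (deriv g)) x + deriv (deriv (\<lambda>t. f t * g t)) x)
             / (deriv (deriv g) x + deriv (\<lambda>t. f t * g t) x)"
proof -
  have dQ: "\<And>t. t\<in>J \<Longrightarrow> (Q has_real_derivative exp (F t)) (at t)"
    using Q sqrt_exp2 by simp
  have gJ: "g t = (2*A*Q t - 2*B/(Q t)^3) / exp (F t)" if t: "t \<in> J" for t
  proof -
    have d1: "((\<lambda>s. A*(Q s)^2 + B/(Q s)^2 + V0) has_real_derivative (2*A*Q t - 2*B/(Q t)^3)*exp(F t)) (at t)"
      using dQ[OF t] Qnz[OF t]
      by (auto intro!: derivative_eq_intros simp: field_simps power_def eval_nat_numeral)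
    have d2: "(V has_real_derivative (2*A*Q t - 2*B/(Q t)^3)*exp(F t)) (at t)"
      by (rule has_field_derivative_transform_within_open[OF d1 J(1) t]) (simp add: VQ)
    have e1: "exp (2 * F t) * g t = (2*A*Q t - 2*B/(Q t)^3)*exp(F t)"
      using DERIV_unique[OF V[OF t] d2] .
    have "exp (2 * F t) = exp (F t) * exp (F t)" by (metis exp_double power2_eq_square)
    with e1 have "(exp (F t) * g t) * exp (F t) = (2*A*Q t - 2*B/(Q t)^3)*exp(F t)"
      by (simp add: ac_simps)
    then have "exp (F t) * g t = 2*A*Q t - 2*B/(Q t)^3" by (metis exp_not_eq_zero mult_cancel_right)
    then show ?thesis by (metis exp_not_eq_zero nonzero_mult_div_cancel_left)
  qed
  define P where "P t = 2*A + 6*B/(Q t)^4" for t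
  define q where "q t = -24*B*exp (F t)/(Q t)^5" for t
  define r where "r t = 120*B*exp (F t)*exp (F t)/(Q t)^6 - 24*B*exp (F t)*f t/(Q t)^5" for t
  have dgg: "(g has_real_derivative P t - f t * g t) (at t)" if t: "t \<in> J" for t
  proof -
    have "((\<lambda>s. (2*A*Q s - 2*B/(Q s)^3) / exp (F s)) has_real_derivative
            P t - f t * ((2*A*Q t - 2*B/(Q t)^3) / exp (F t))) (at t)"
      using dQ[OF t] Qnz[OF t] F[OF t]
      apply (auto intro!: derivative_eq_intros)
      apply (simp add: P_def field_simps)
      done
    then have "(g has_real_derivative P t - f t * ((2*A*Q t - 2*B/(Q t)^3) / exp (F t))) (at t)"
      by (rule has_field_derivative_transform_within_open[OF _ J(1) t]) (simp add: gJ)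
    then show ?thesis using gJ[OF t] by simp
  qed
  have hJ: "deriv g t + f t * g t = P t" if t: "t \<in> J" for t
    using DERIV_imp_deriv[OF dgg[OF t]] by simp
  have dP: "(P has_real_derivative q t) (at t)" if t: "t \<in> J" for t
    unfolding P_def[abs_def] q_def using dQ[OF t] Qnz[OF t]
    by (auto intro!: derivative_eq_intros simp: field_simps power_def eval_nat_numeral)
  have dfg: "((\<lambda>s. f s * g s) has_real_derivative f t * deriv g t + deriv f t * g t) (at t)"
    if t: "t \<in> J" for t
    using smoothD0[OF smooth(1) t] smoothD0[OF smooth(2) t]
    by (auto intro!: derivative_eq_intros)
  have dfgJ: "deriv (\<lambda>s. f s * g s) t = f t * deriv g t + deriv f t * g t" if t: "t \<in> J" for t
    using DERIV_imp_deriv[OF dfg[OF t]] .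
  have kJ: "deriv (deriv g) t + deriv (\<lambda>s. f s * g s) t = q t" if t: "t \<in> J" for t
  proof -
    have a: "((\<lambda>s. deriv g s + f s * g s) has_real_derivative deriv (deriv g) t + deriv (\<lambda>s. f s * g s) t) (at t)"
      using DERIV_add[OF smoothD1[OF smooth(2) t] dfg[OF t]] dfgJ[OF t] by simp
    have b: "((\<lambda>s. deriv g s + f s * g s) has_real_derivative q t) (at t)"
      by (rule has_field_derivative_transform_within_open[OF dP[OF t] J(1) t]) (simp add: hJ)
    show ?thesis using DERIV_unique[OF a b] .
  qed
  have dq: "(q has_real_derivative r t) (at t)" if t: "t \<in> J" for t
    unfolding q_def[abs_def] r_def using dQ[OF t] Qnz[OF t] F[OF t]
    by (auto intro!: derivative_eq_intros simp: field_simps power_def eval_nat_numeral)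
  have lJ: "deriv (deriv (deriv g)) t + deriv (deriv (\<lambda>s. f s * g s)) t = r t" if t: "t \<in> J" for t
  proof -
    have c: "((\<lambda>s. f s * deriv g s + deriv f s * g s) has_real_derivative
       f t * deriv (deriv g) t + deriv f t * deriv g t + (deriv f t * deriv g t + deriv (deriv f) t * g t)) (at t)"
      using smoothD0[OF smooth(1) t] smoothD0[OF smooth(2) t] smoothD1[OF smooth(1) t] smoothD1[OF smooth(2) t]
      by (auto intro!: derivative_eq_intros)
    have c2: "(deriv (\<lambda>s. f s * g s) has_real_derivative
       f t * deriv (deriv g) t + deriv f t * deriv g t + (deriv f t * deriv g t + deriv (deriv f) t * g t)) (at t)"
      by (rule has_field_derivative_transform_within_open[OF c J(1) t]) (simp add: dfgJ)
    have a: "((\<lambda>s. deriv (deriv g) s + deriv (\<lambda>s. f s * g s) s) has_real_derivative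
        deriv (deriv (deriv g)) t + deriv (deriv (\<lambda>s. f s * g s)) t) (at t)"
      using DERIV_add[OF smoothD2[OF smooth(2) t] c2] DERIV_imp_deriv[OF c2] by simp
    have b: "((\<lambda>s. deriv (deriv g) s + deriv (\<lambda>s. f s * g s) s) has_real_derivative r t) (at t)"
      by (rule has_field_derivative_transform_within_open[OF dq[OF t] J(1) t]) (simp add: kJ)
    show ?thesis using DERIV_unique[OF a b] .
  qed
  show ?thesis
  proof (intro ballI impI)
    fix x assume x: "x \<in> J"
    have e: "exp (F x) \<noteq> 0" by simp
    have h1: "deriv g x + f x * g x - 2 * A = 6*B/(Q x)^4" using hJ[OF x] by (simp add: P_def)
    show "f x = - (5/4) * ((deriv (deriv g) x + deriv (\<lambda>t. f t * g t) x)
                       / (deriv g x + f x * g x - 2 * A))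
           + (deriv (deriv (deriv g)) x + deriv (deriv (\<lambda>t. f t * g t)) x)
             / (deriv (deriv g) x + deriv (\<lambda>t. f t * g t) x)"
      unfolding h1 kJ[OF x] lJ[OF x] q_def r_def using B Qnz[OF x] e
      by (simp add: field_simps eval_nat_numeral)
  qed
qed

end
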